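(* Let $k$ be a field of characteristic zero, $A_1=k[t,\partial]$ the first Weyl algebra, $R=k[t]$, let $V$ be a primary decomposable subspace of $R$, let $p\in k[t]$ and $\sigma:=\exp(\mathrm{ad}(p))$. Then $\sigma(\mathcal{D}(R,V))=\mathcal{D}(R,V)$ if and only if $p\in S(V)$.
   Context: $A_1$ is the $k$-algebra generated by $t,\partial$ with $\partial t-t\partial=1$. Elements of $k(t)[\partial]$ act as $k$-linear endomorphisms of $k(t)$ (with $\partial$ acting as the derivative). For $k$-subspaces $V,W\subseteq k(t)$, $\mathcal{D}(V,W):=\{d\in k(t)[\partial]: d(V)\subseteq W\}$. For $b\in R$, $\mathcal{O}(b):=\{a\in R: a'\in bR\}$ ($a'$ the formal derivative), and for a subspace $V\subseteq R$, $S(V):=\{a\in R: aV\subseteq V\}$. A non-zero $k$-subspace $V$ of $R$ is primary decomposable if $S(V)$ contains $\mathcal{O}(b)$ for some $b\neq 0$. For $p\in R$, $\exp(\mathrm{ad}(p))$ is the automorphism of $A_1$ given by $d\mapsto d+[d,p]+\frac{1}{2!}[[d,p],p]+\frac{1}{3!}[[[d,p],p],p]+\cdots$, where $[d,p]=dp-pd$ (a finite sum since $d\mapsto[d,p]$ is locally nilpotent). *)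

theory Defs
  imports "HOL-Computational_Algebra.Polynomial" "HOL-Computational_Algebra.Fraction_Field"
begin

(* R = k[t] is  'k poly ;  k(t) is  'k poly fract ;  R embeds into k(t) via p |-> Fract p 1. *)

definition emb :: "'k::field poly \<Rightarrow> 'k poly fract" where
  "emb p = Fract p 1"

(* derivative on k(t):  (a/b)' = (a' b - a b') / b^2  (independent of the representative a/b) *)
definition fderiv :: "'k::field_char_0 poly fract \<Rightarrow> 'k poly fract" where
  "fderiv x = (SOME y. \<exists>a b. b \<noteq> 0 \<and> x = Fract a b \<and> y = Fract (pderiv a * b - a * pderiv b) (b * b))"

(* an element of k(t)[\<partial>] is  \<Sum> d i * \<partial>^i , i.e. a finitely supported coefficient function *)
type_synonym 'k diffop = "nat \<Rightarrow> 'k poly fract"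

definition is_diffop :: "'k::field diffop \<Rightarrow> bool" where
  "is_diffop d \<longleftrightarrow> finite {i. d i \<noteq> 0}"

definition op_apply :: "'k::field_char_0 diffop \<Rightarrow> 'k poly fract \<Rightarrow> 'k poly fract" where
  "op_apply d f = (\<Sum>i\<in>{i. d i \<noteq> 0}. d i * (fderiv ^^ i) f)"

(* multiplication in k(t)[\<partial>]:  (a \<partial>^i)(b \<partial>^j) = \<Sum>_l (i choose l) a b^(l) \<partial>^(i+j-l) *)
definition op_mul :: "'k::field_char_0 diffop \<Rightarrow> 'k diffop \<Rightarrow> 'k diffop" where
  "op_mul d e = (\<lambda>n. \<Sum>i\<in>{i. d i \<noteq> 0}. \<Sum>j\<in>{j. e j \<noteq> 0}. \<Sum>l\<in>{..i}.
      if i + j - l = n then of_nat (i choose l) * d i * (fderiv ^^ l) (e j) else 0)"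

definition op_const :: "'k::field poly fract \<Rightarrow> 'k diffop" where
  "op_const c = (\<lambda>n. if n = 0 then c else 0)"

definition op_ad :: "'k::field_char_0 poly \<Rightarrow> 'k diffop \<Rightarrow> 'k diffop" where
  "op_ad p d = (\<lambda>n. op_mul d (op_const (emb p)) n - op_mul (op_const (emb p)) d n)"

definition exp_ad :: "'k::field_char_0 poly \<Rightarrow> 'k diffop \<Rightarrow> 'k diffop" where
  "exp_ad p d = (\<lambda>n. \<Sum>m\<in>{m. (op_ad p ^^ m) d \<noteq> (\<lambda>_. 0)}. inverse (of_nat (fact m)) * ((op_ad p ^^ m) d) n)"

definition Dop :: "'k::field_char_0 poly fract set \<Rightarrow> 'k poly fract set \<Rightarrow> 'k diffop set" where
  "Dop V W = {d. is_diffop d \<and> (\<forall>f\<in>V. op_apply d f \<in> W)}"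

definition Oset :: "'k::field poly \<Rightarrow> 'k poly set" where
  "Oset b = {a. b dvd pderiv a}"

definition Sset :: "'k::field poly set \<Rightarrow> 'k poly set" where
  "Sset V = {a. \<forall>v\<in>V. a * v \<in> V}"

definition k_subspace :: "'k::field poly set \<Rightarrow> bool" where
  "k_subspace V \<longleftrightarrow> 0 \<in> V \<and> (\<forall>x\<in>V. \<forall>y\<in>V. x + y \<in> V) \<and> (\<forall>c x. x \<in> V \<longrightarrow> smult c x \<in> V)"

definition primary_decomposable :: "'k::field poly set \<Rightarrow> bool" where
  "primary_decomposable V \<longleftrightarrow> k_subspace V \<and> V \<noteq> {0} \<and> (\<exists>b. b \<noteq> 0 \<and> Oset b \<subseteq> Sset V)"

end

theory Submission
  imports Defs
begin


lemma emb_add: "emb (a + b) = emb a + emb b" by (simp add: emb_def)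
lemma emb_mult: "emb (a * b) = emb a * emb b" by (simp add: emb_def)
lemma emb_diff: "emb (a - b) = emb a - emb b" by (simp add: emb_def)
lemma emb_minus: "emb (- a) = - emb a" by (simp add: emb_def)
lemma emb_0: "emb 0 = 0" by (simp add: emb_def Zero_fract_def)
lemma emb_1: "emb 1 = 1" by (simp add: emb_def One_fract_def)
lemma emb_inj: "emb a = emb b \<longleftrightarrow> a = b" by (simp add: emb_def eq_fract)
lemma emb_eq_0: "emb a = 0 \<longleftrightarrow> a = 0" using emb_inj[of a 0] by (simp add: emb_0)

lemma fderiv_emb: "fderiv (emb (r::'k::field_char_0 poly)) = emb (pderiv r)"
proof -
  let ?P = "\<lambda>y. \<exists>a b. b \<noteq> 0 \<and> emb r = Fract a b \<and> y = Fract (pderiv a * b - a * pderiv b) (b * b)"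
  have ex: "?P (emb (pderiv r))"
    by (rule exI[of _ r], rule exI[of _ 1]) (simp add: emb_def)
  have "\<And>y. ?P y \<Longrightarrow> y = emb (pderiv r)"
  proof -
    fix y assume "?P y"
    then obtain a b where b: "b \<noteq> 0" and e: "emb r = Fract a b" and y: "y = Fract (pderiv a * b - a * pderiv b) (b * b)" by blast
    from e b have a: "a = r * b" by (simp add: emb_def eq_fract)
    have "pderiv a * b - a * pderiv b = (b * b) * pderiv r"
      by (simp add: a pderiv_mult algebra_simps)
    then show "y = emb (pderiv r)" using b by (simp add: y emb_def eq_fract)
  qed
  then show ?thesis unfolding fderiv_def using someI[of ?P, OF ex] by blast
qed

lemma fderiv_pow_emb: "(fderiv ^^ i) (emb r) = emb ((pderiv ^^ i) r)"
  by (induction i) (simp_all add: fderiv_emb)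



lemma pderiv_sum: "pderiv (sum f A) = (\<Sum>x\<in>A. pderiv (f x))"
  using higher_pderiv_sum[of 1 f A] by simp

lemma leibniz:
  fixes p r :: "'k::field_char_0 poly"
  shows "(pderiv ^^ n) (p * r) = (\<Sum>l\<le>n. of_nat (n choose l) * (pderiv ^^ l) p * (pderiv ^^ (n - l)) r)"
proof (induction n)
  case 0 then show ?case by simp
next
  case (Suc n)
  define f where "f l = (pderiv ^^ l) p" for l
  define g where "g l = (pderiv ^^ l) r" for l
  have fS: "pderiv (f l) = f (Suc l)" for l by (simp add: f_def)
  have gS: "pderiv (g l) = g (Suc l)" for l by (simp add: g_def)
  have "(pderiv ^^ Suc n) (p * r) = pderiv (\<Sum>l\<le>n. of_nat (n choose l) * f l * g (n - l))"
    using Suc by (simp add: f_def g_def)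
  also have "\<dots> = (\<Sum>l\<le>n. of_nat (n choose l) * f (Suc l) * g (n - l))
       + (\<Sum>l\<le>n. of_nat (n choose l) * f l * g (Suc n - l))"
  proof -
    have "pderiv (of_nat (n choose l) * f l * g (n - l)) =
       of_nat (n choose l) * f (Suc l) * g (n - l) + of_nat (n choose l) * f l * g (Suc n - l)" if "l \<le> n" for l
      using that by (simp add: pderiv_mult fS gS Suc_diff_le algebra_simps)
    then show ?thesis
      by (simp add: pderiv_sum sum.distrib[symmetric])
  qed
  also have "(\<Sum>l\<le>n. of_nat (n choose l) * f l * g (Suc n - l)) =
     (\<Sum>l\<le>Suc n. of_nat (n choose l) * f l * g (Suc n - l))"
    by simp
  also have "\<dots> = f 0 * g (Suc n) + (\<Sum>l\<le>n. of_nat (n choose Suc l) * f (Suc l) * g (n - l))"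
    by (subst sum.atMost_Suc_shift) simp
  finally have "(pderiv ^^ Suc n) (p * r) = f 0 * g (Suc n) + ((\<Sum>l\<le>n. of_nat (n choose l) * f (Suc l) * g (n - l))
     + (\<Sum>l\<le>n. of_nat (n choose Suc l) * f (Suc l) * g (n - l)))" by (simp add: algebra_simps)
  also have "\<dots> = (\<Sum>l\<le>Suc n. of_nat (Suc n choose l) * f l * g (Suc n - l))"
    by (subst sum.atMost_Suc_shift) (simp add: sum.distrib[symmetric] algebra_simps)
  finally show ?case by (simp add: f_def g_def)
qed



definition ord_le :: "'k::field_char_0 diffop \<Rightarrow> nat \<Rightarrow> bool" where
  "ord_le d K \<longleftrightarrow> (\<forall>i\<ge>K. d i = 0)"

definition act :: "'k::field_char_0 diffop \<Rightarrow> 'k poly \<Rightarrow> 'k poly fract" where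
  "act d r = op_apply d (emb r)"

lemma ord_le_diffop: "ord_le d K \<Longrightarrow> is_diffop d"
  unfolding ord_le_def is_diffop_def
  by (rule finite_subset[of _ "{..<K}"]) (auto simp: not_less[symmetric])

lemma diffop_ord: "is_diffop d \<Longrightarrow> \<exists>K. ord_le d K"
proof -
  assume "is_diffop d"
  then obtain K where "\<forall>i\<in>{i. d i \<noteq> 0}. i < K" unfolding is_diffop_def
    using finite_nat_set_iff_bounded by blast
  then show ?thesis unfolding ord_le_def by (metis leD mem_Collect_eq)
qed

lemma ord_le_mono: "ord_le d K \<Longrightarrow> K \<le> K' \<Longrightarrow> ord_le d K'"
  unfolding ord_le_def by auto

lemma op_apply_ord: "ord_le d K \<Longrightarrow> op_apply d f = (\<Sum>i<K. d i * (fderiv ^^ i) f)"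
  unfolding op_apply_def
  by (rule sum.mono_neutral_left) (auto simp: ord_le_def not_less[symmetric])

lemma act_ord: "ord_le d K \<Longrightarrow> act d r = (\<Sum>i<K. d i * emb ((pderiv ^^ i) r))"
  by (simp add: act_def op_apply_ord fderiv_pow_emb)

lemma fderiv_pow_0: "(fderiv ^^ l) (0 :: 'k::field_char_0 poly fract) = 0"
  using fderiv_pow_emb[of l "0::'k poly"] by (simp add: emb_0)

lemma emb_sum: "emb (sum f A) = (\<Sum>x\<in>A. emb (f x))"
  by (induction A rule: infinite_finite_induct) (simp_all add: emb_0 emb_add)

lemma emb_of_nat: "emb (of_nat n) = of_nat n"
  by (simp add: emb_def of_nat_fract)

lemma op_mul_ord:
  assumes "ord_le d K" "ord_le e J"
  shows "op_mul d e n = (\<Sum>i<K. \<Sum>j<J. \<Sum>l\<le>i.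
      if i + j - l = n then of_nat (i choose l) * d i * (fderiv ^^ l) (e j) else 0)"
proof -
  have "op_mul d e n = (\<Sum>i\<in>{i. d i \<noteq> 0}. \<Sum>j<J. \<Sum>l\<le>i.
      if i + j - l = n then of_nat (i choose l) * d i * (fderiv ^^ l) (e j) else 0)"
    unfolding op_mul_def
  proof (rule sum.cong[OF refl], rule sum.mono_neutral_left)
    fix i
    show "\<forall>j\<in>{..<J} - {j. e j \<noteq> 0}. (\<Sum>l\<le>i. if i + j - l = n then of_nat (i choose l) * d i * (fderiv ^^ l) (e j) else 0) = 0"
      by (auto simp: fderiv_pow_0 cong: if_cong)
  qed (use assms(2) in \<open>auto simp: ord_le_def not_less[symmetric]\<close>)
  also have "\<dots> = (\<Sum>i<K. \<Sum>j<J. \<Sum>l\<le>i.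
      if i + j - l = n then of_nat (i choose l) * d i * (fderiv ^^ l) (e j) else 0)"
  proof (rule sum.mono_neutral_left)
    show "\<forall>i\<in>{..<K} - {i. d i \<noteq> 0}. (\<Sum>j<J. \<Sum>l\<le>i.
      if i + j - l = n then of_nat (i choose l) * d i * (fderiv ^^ l) (e j) else 0) = 0"
    proof
      fix i assume "i \<in> {..<K} - {i. d i \<noteq> 0}"
      then have "d i = 0" by auto
      then show "(\<Sum>j<J. \<Sum>l\<le>i.
        if i + j - l = n then of_nat (i choose l) * d i * (fderiv ^^ l) (e j) else 0) = 0"
        by (simp cong: if_cong)
    qed
  qed (use assms(1) in \<open>auto simp: ord_le_def not_less[symmetric]\<close>)
  finally show ?thesis .
qed

lemma sum_lessThan_1: "(\<Sum>j<(1::nat). f j) = f 0" by simp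

lemma if_mult0: "(if c then a else 0) * b = (if c then a * b else (0::'a::semiring_0))" by simp

lemma op_const_0: "op_const c 0 = c" by (simp add: op_const_def)

lemma ord_const: "ord_le (op_const c) 1"
  by (simp add: ord_le_def op_const_def)

lemma op_ad_formula:
  assumes "ord_le d K"
  shows "op_ad p d n = (\<Sum>i<K. \<Sum>l\<le>i. if i - l = n then of_nat (i choose l) * d i * emb ((pderiv ^^ l) p) else 0)
     - emb p * d n"
proof -
  have 1: "op_mul d (op_const (emb p)) n = (\<Sum>i<K. \<Sum>l\<le>i. if i - l = n then of_nat (i choose l) * d i * emb ((pderiv ^^ l) p) else 0)"
    using op_mul_ord[OF assms ord_const, of "emb p" n] by (simp add: sum_lessThan_1 op_const_0 fderiv_pow_emb cong: if_cong)
  have "op_mul (op_const (emb p)) d n = (\<Sum>j<K. if j = n then emb p * d j else 0)"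
    using op_mul_ord[OF ord_const assms, of "emb p" n] by (simp add: sum_lessThan_1 op_const_0 cong: if_cong)
  also have "\<dots> = emb p * d n"
    using assms by (auto simp: ord_le_def)
  finally show ?thesis using 1 by (simp add: op_ad_def)
qed

lemma inner_collapse:
  fixes i n :: nat
  assumes "i \<le> n"
  shows "(\<Sum>l\<le>i. if i - l = n then F l else 0) = (if i = n then F 0 else 0)"
proof -
  have "(\<Sum>l\<le>i. if i - l = n then F l else 0) = (\<Sum>l\<le>i. if l = 0 then (if i = n then F 0 else 0) else 0)"
  proof (rule sum.cong[OF refl])
    fix l assume "l \<in> {..i}"
    then show "(if i - l = n then F l else 0) = (if l = 0 then (if i = n then F 0 else 0) else 0)"
      using assms by (cases "l = 0") auto
  qed
  also have "\<dots> = (if i = n then F 0 else 0)" by (simp add: sum.delta)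
  finally show ?thesis .
qed

lemma ord_op_ad_Suc:
  assumes "ord_le d (Suc K)"
  shows "ord_le (op_ad p d) K"
  unfolding ord_le_def
proof (intro allI impI)
  fix n assume n: "K \<le> n"
  have "(\<Sum>i<Suc K. \<Sum>l\<le>i. if i - l = n then of_nat (i choose l) * d i * emb ((pderiv ^^ l) p) else 0)
      = (\<Sum>i<Suc K. if i = n then d i * emb p else 0)"
    apply (rule sum.cong[OF refl])
    apply (subst inner_collapse)
    using n by (auto simp: emb_def)
  also have "\<dots> = d n * emb p"
    using assms by (auto simp: ord_le_def)
  finally show "op_ad p d n = 0"
    using op_ad_formula[OF assms, of p n] by simp
qed

lemma ord_op_ad: "ord_le d K \<Longrightarrow> ord_le (op_ad p d) K"
  by (rule ord_op_ad_Suc) (auto intro: ord_le_mono)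

lemma swap_collapse:
  fixes A :: "nat \<Rightarrow> nat \<Rightarrow> 'a::comm_ring_1" and K :: nat
  shows "(\<Sum>n<K. (\<Sum>i<K. \<Sum>l\<le>i. if i - l = n then A i l else 0) * B n) = (\<Sum>i<K. \<Sum>l\<le>i. A i l * B (i - l))"
proof -
  have "(\<Sum>n<K. (\<Sum>i<K. \<Sum>l\<le>i. if i - l = n then A i l else 0) * B n)
      = (\<Sum>n<K. \<Sum>i<K. \<Sum>l\<le>i. if i - l = n then A i l * B n else 0)"
    by (simp add: sum_distrib_right if_mult0)
  also have "\<dots> = (\<Sum>i<K. \<Sum>n<K. \<Sum>l\<le>i. if i - l = n then A i l * B n else 0)"
    by (rule sum.swap)
  also have "\<dots> = (\<Sum>i<K. \<Sum>l\<le>i. \<Sum>n<K. if i - l = n then A i l * B n else 0)"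
    by (rule sum.cong[OF refl], rule sum.swap)
  also have "\<dots> = (\<Sum>i<K. \<Sum>l\<le>i. A i l * B (i - l))"
    by (rule sum.cong[OF refl], rule sum.cong[OF refl]) (auto simp: sum.delta)
  finally show ?thesis .
qed

lemma act_op_ad:
  assumes "ord_le d K"
  shows "act (op_ad p d) r = act d (p * r) - emb p * act d r"
proof -
  have "act (op_ad p d) r = (\<Sum>n<K. op_ad p d n * emb ((pderiv ^^ n) r))"
    using act_ord[OF ord_op_ad[OF assms]] .
  also have "\<dots> = (\<Sum>n<K. (\<Sum>i<K. \<Sum>l\<le>i. if i - l = n then of_nat (i choose l) * d i * emb ((pderiv ^^ l) p) else 0) * emb ((pderiv ^^ n) r))
      - (\<Sum>n<K. emb p * d n * emb ((pderiv ^^ n) r))"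
    by (simp add: op_ad_formula[OF assms] left_diff_distrib sum_subtractf)
  also have "(\<Sum>n<K. (\<Sum>i<K. \<Sum>l\<le>i. if i - l = n then of_nat (i choose l) * d i * emb ((pderiv ^^ l) p) else 0) * emb ((pderiv ^^ n) r))
     = (\<Sum>i<K. \<Sum>l\<le>i. of_nat (i choose l) * d i * emb ((pderiv ^^ l) p) * emb ((pderiv ^^ (i - l)) r))"
    by (rule swap_collapse)
  also have "\<dots> = (\<Sum>i<K. d i * emb ((pderiv ^^ i) (p * r)))"
    by (rule sum.cong[OF refl]) (simp add: leibniz emb_sum emb_mult emb_of_nat sum_distrib_left algebra_simps)
  also have "\<dots> = act d (p * r)" using act_ord[OF assms] by simp
  also have "(\<Sum>n<K. emb p * d n * emb ((pderiv ^^ n) r)) = emb p * act d r"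
    using act_ord[OF assms] by (simp add: sum_distrib_left algebra_simps)
  finally show ?thesis .
qed



definition kap :: "'k::field_char_0 \<Rightarrow> 'k poly fract" where "kap c = emb [:c:]"

lemma kap_add: "kap (a + b) = kap a + kap b" by (simp add: kap_def emb_add[symmetric])
lemma kap_mult: "kap (a * b) = kap a * kap b" by (simp add: kap_def emb_mult[symmetric] ac_simps)
lemma kap_0: "kap 0 = 0" by (simp add: kap_def emb_0)
lemma kap_1: "kap 1 = 1" by (simp add: kap_def emb_1[symmetric] one_pCons)
lemma kap_of_nat: "of_nat n = kap (of_nat n)"
  by (simp add: kap_def emb_of_nat[symmetric] of_nat_poly)
lemma kap_inverse: "inverse (kap c) = kap (inverse c)"
  by (cases "c = 0") (simp_all add: kap_def emb_def eq_fract One_fract_def[symmetric] Zero_fract_def[symmetric] one_pCons)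
lemma kap_sum: "kap (sum f A) = (\<Sum>x\<in>A. kap (f x))"
  by (induction A rule: infinite_finite_induct) (simp_all add: kap_0 kap_add)
lemma kap_emb: "kap c * emb v = emb (smult c v)"
  by (simp add: kap_def emb_mult[symmetric])

definition Ad :: "'k::field_char_0 poly \<Rightarrow> ('k poly \<Rightarrow> 'k poly fract) \<Rightarrow> ('k poly \<Rightarrow> 'k poly fract)" where
  "Ad p X = (\<lambda>r. X (p * r) - emb p * X r)"

lemma ord_op_ad_pow: "ord_le d K \<Longrightarrow> ord_le ((op_ad p ^^ m) d) K"
  by (induction m) (simp_all add: ord_op_ad)

lemma ord_op_ad_pow_dec: "ord_le d K \<Longrightarrow> ord_le ((op_ad p ^^ m) d) (K - m)"
proof (induction m)
  case 0 then show ?case by simp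
next
  case (Suc m)
  show ?case
  proof (cases "K - m")
    case 0
    then show ?thesis using Suc by (simp add: ord_op_ad)
  next
    case (Suc k)
    then have "K - Suc m = k" by simp
    then show ?thesis using Suc.IH[OF Suc.prems] Suc ord_op_ad_Suc[where d="(op_ad p ^^ m) d" and K=k and p=p] by simp
  qed
qed

lemma ord_le_0: "ord_le d 0 \<longleftrightarrow> d = (\<lambda>_. 0)"
  by (auto simp: ord_le_def)

lemma op_ad_pow_nil: "ord_le d K \<Longrightarrow> K \<le> m \<Longrightarrow> (op_ad p ^^ m) d = (\<lambda>_. 0)"
  using ord_op_ad_pow_dec[where d=d and K=K and p=p and m=m] by (simp add: ord_le_0)

lemma act_pow: "ord_le d K \<Longrightarrow> act ((op_ad p ^^ m) d) = (Ad p ^^ m) (act d)"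
proof (induction m)
  case 0 then show ?case by simp
next
  case (Suc m)
  have o: "ord_le ((op_ad p ^^ m) d) K" using Suc.prems by (rule ord_op_ad_pow)
  show ?case
    using act_op_ad[OF o] Suc
    by (simp add: Ad_def fun_eq_iff)
qed

lemma act_zero: "act (\<lambda>_. 0) r = 0"
  by (simp add: act_ord[of _ 0] ord_le_def)

lemma Ad_nil: "ord_le d K \<Longrightarrow> K \<le> m \<Longrightarrow> (Ad p ^^ m) (act d) r = 0"
  using act_pow[where d=d and K=K and p=p and m=m] op_ad_pow_nil[where d=d and K=K and m=m and p=p] act_zero by metis

lemma exp_ad_ord:
  assumes "ord_le d K"
  shows "exp_ad p d = (\<lambda>n. \<Sum>m<K. kap (inverse (of_nat (fact m))) * (op_ad p ^^ m) d n)"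
proof
  fix n
  have "exp_ad p d n = (\<Sum>m\<in>{m. (op_ad p ^^ m) d \<noteq> (\<lambda>_. 0)}. inverse (of_nat (fact m)) * ((op_ad p ^^ m) d) n)"
    by (simp add: exp_ad_def)
  also have "\<dots> = (\<Sum>m<K. inverse (of_nat (fact m)) * ((op_ad p ^^ m) d) n)"
  proof (rule sum.mono_neutral_left)
    show "{m. (op_ad p ^^ m) d \<noteq> (\<lambda>_. 0)} \<subseteq> {..<K}"
      using op_ad_pow_nil[OF assms] by (auto simp: not_less[symmetric])
  qed auto
  finally show "exp_ad p d n = (\<Sum>m<K. kap (inverse (of_nat (fact m))) * (op_ad p ^^ m) d n)"
    by (simp add: kap_of_nat kap_inverse)
qed

lemma ord_le_sum: "(\<And>m. m \<in> A \<Longrightarrow> ord_le (e m) K) \<Longrightarrow> ord_le (\<lambda>n. \<Sum>m\<in>A. c m * e m n) K"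
  by (simp add: ord_le_def)

lemma ord_exp_ad: "ord_le d K \<Longrightarrow> ord_le (exp_ad p d) K"
  by (simp add: exp_ad_ord ord_le_sum ord_op_ad_pow)

lemma act_lin:
  assumes "\<And>m. m \<in> A \<Longrightarrow> ord_le (e m) K" "finite A"
  shows "act (\<lambda>n. \<Sum>m\<in>A. c m * e m n) r = (\<Sum>m\<in>A. c m * act (e m) r)"
proof -
  have "act (\<lambda>n. \<Sum>m\<in>A. c m * e m n) r = (\<Sum>i<K. (\<Sum>m\<in>A. c m * e m i) * emb ((pderiv ^^ i) r))"
    by (rule act_ord[OF ord_le_sum[OF assms(1)]])
  also have "\<dots> = (\<Sum>m\<in>A. c m * (\<Sum>i<K. e m i * emb ((pderiv ^^ i) r)))"
    by (simp add: sum_distrib_right sum_distrib_left mult.assoc sum.swap[of _ "{..<K}"])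
  also have "\<dots> = (\<Sum>m\<in>A. c m * act (e m) r)"
    using act_ord[OF assms(1)] by simp
  finally show ?thesis .
qed

lemma act_exp:
  assumes "ord_le d K"
  shows "act (exp_ad p d) r = (\<Sum>m<K. kap (inverse (of_nat (fact m))) * (Ad p ^^ m) (act d) r)"
  unfolding exp_ad_ord[OF assms] by (subst act_lin[where K=K]) (auto simp: ord_op_ad_pow[OF assms] act_pow[OF assms])

lemma Ad_lin: "Ad p (\<lambda>r. \<Sum>m\<in>A. c m * X m r) = (\<lambda>r. \<Sum>m\<in>A. c m * Ad p (X m) r)"
  by (simp add: Ad_def fun_eq_iff sum_distrib_left sum_subtractf algebra_simps)

lemma Ad_pow_lin: "(Ad p ^^ s) (\<lambda>r. \<Sum>m\<in>A. c m * (Ad p ^^ m) X r) = (\<lambda>r. \<Sum>m\<in>A. c m * (Ad p ^^ (s + m)) X r)"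
  by (induction s) (simp_all add: Ad_lin)

lemma coeff_binom:
  fixes x :: "'a::field_char_0"
  shows "(\<Sum>m\<le>u. inverse (fact m) * (x ^ (u - m) / fact (u - m))) = (x + 1) ^ u / fact u"
proof -
  have "(x + 1) ^ u = (\<Sum>m\<le>u. of_nat (u choose m) * 1 ^ m * x ^ (u - m))"
    using binomial_ring[of 1 x u] by (simp add: add.commute)
  also have "\<dots> = (\<Sum>m\<le>u. fact u * (inverse (fact m) * (x ^ (u - m) / fact (u - m))))"
    by (rule sum.cong[OF refl]) (simp add: binomial_fact field_simps)
  also have "\<dots> = fact u * (\<Sum>m\<le>u. inverse (fact m) * (x ^ (u - m) / fact (u - m)))"
    by (simp add: sum_distrib_left)
  finally show ?thesis by simp
qed

lemma box_triangle:
  fixes K :: nat and f :: "nat \<Rightarrow> nat \<Rightarrow> 'a::comm_semiring_1"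
  assumes "\<And>u. K \<le> u \<Longrightarrow> G u = 0"
  shows "(\<Sum>m<K. \<Sum>s<K. f m s * G (m + s)) = (\<Sum>u<K. (\<Sum>m\<le>u. f m (u - m)) * G u)"
proof -
  have "(\<Sum>m<K. \<Sum>s<K. f m s * G (m + s)) = (\<Sum>(m,s)\<in>{..<K} \<times> {..<K}. f m s * G (m + s))"
    by (simp add: sum.cartesian_product)
  also have "\<dots> = (\<Sum>(m,s)\<in>{(m,s). m + s < K}. f m s * G (m + s))"
  proof (rule sum.mono_neutral_right)
    show "\<forall>i\<in>{..<K} \<times> {..<K} - {(m, s). m + s < K}. (case i of (m, s) \<Rightarrow> f m s * G (m + s)) = 0"
      using assms by (auto simp: not_less[symmetric]) (metis mult_zero_right not_less)
  qed auto
  also have "\<dots> = (\<Sum>u<K. \<Sum>m\<le>u. f m (u - m) * G (m + (u - m)))"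
    by (rule sum.triangle_reindex)
  also have "\<dots> = (\<Sum>u<K. (\<Sum>m\<le>u. f m (u - m)) * G u)"
    by (simp add: sum_distrib_right)
  finally show ?thesis .
qed

lemma compose_exp:
  assumes d: "ord_le d K" and e: "ord_le e K"
    and ae: "act e = (\<lambda>r. \<Sum>s<K. kap (x ^ s / fact s) * (Ad p ^^ s) (act d) r)"
  shows "act (exp_ad p e) r = (\<Sum>u<K. kap ((x + 1) ^ u / fact u) * (Ad p ^^ u) (act d) r)"
proof -
  have "act (exp_ad p e) r = (\<Sum>m<K. kap (inverse (of_nat (fact m))) * (Ad p ^^ m) (act e) r)"
    by (rule act_exp[OF e])
  also have "\<dots> = (\<Sum>m<K. \<Sum>s<K. (kap (inverse (fact m)) * kap (x ^ s / fact s)) * (Ad p ^^ (m + s)) (act d) r)"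
    by (simp add: ae Ad_pow_lin sum_distrib_left mult.assoc)
  also have "\<dots> = (\<Sum>u<K. (\<Sum>m\<le>u. kap (inverse (fact m)) * kap (x ^ (u - m) / fact (u - m))) * (Ad p ^^ u) (act d) r)"
    by (rule box_triangle) (rule Ad_nil[OF d])
  also have "\<dots> = (\<Sum>u<K. kap ((x + 1) ^ u / fact u) * (Ad p ^^ u) (act d) r)"
    by (simp only: kap_mult[symmetric] kap_sum[symmetric] coeff_binom)
  finally show ?thesis .
qed



lemma higher_pderiv_monom_same: "(pderiv ^^ i) (monom (1::'k::field_char_0) i) = [:fact i:]"
  by (rule poly_eqI) (simp add: coeff_higher_pderiv coeff_monom pochhammer_fact[symmetric] coeff_pCons split: nat.split)

lemma higher_pderiv_monom_gt: "i0 < i \<Longrightarrow> (pderiv ^^ i) (monom (1::'k::field_char_0) i0) = 0"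
  by (rule poly_eqI) (simp add: coeff_higher_pderiv coeff_monom)

lemma faithful:
  assumes o: "ord_le d K" and z: "\<And>r. act d r = 0"
  shows "d = (\<lambda>_. 0)"
proof (rule ccontr)
  assume "d \<noteq> (\<lambda>_. 0)"
  then have ex: "\<exists>i. d i \<noteq> 0" by auto
  define i0 where "i0 = (LEAST i. d i \<noteq> 0)"
  have di0: "d i0 \<noteq> 0" using LeastI_ex[OF ex] by (simp add: i0_def)
  have lt: "i < i0 \<Longrightarrow> d i = 0" for i using not_less_Least[of i "\<lambda>i. d i \<noteq> 0"] by (simp add: i0_def)
  have i0K: "i0 < K" using o di0 by (auto simp: ord_le_def not_less[symmetric])
  have "act d (monom 1 i0) = (\<Sum>i<K. d i * emb ((pderiv ^^ i) (monom 1 i0)))"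
    by (rule act_ord[OF o])
  also have "\<dots> = (\<Sum>i<K. if i = i0 then d i0 * emb [:fact i0:] else 0)"
  proof (rule sum.cong[OF refl])
    fix i assume "i \<in> {..<K}"
    show "d i * emb ((pderiv ^^ i) (monom 1 i0)) = (if i = i0 then d i0 * emb [:fact i0:] else 0)"
    proof (cases "i < i0")
      case True then show ?thesis using lt[of i] by simp
    next
      case False
      show ?thesis
      proof (cases "i = i0")
        case True then show ?thesis by (simp add: higher_pderiv_monom_same)
      next
        case F: False
        then have "i0 < i" using False by simp
        then show ?thesis using F by (simp add: higher_pderiv_monom_gt emb_0)
      qed
    qed
  qed
  also have "\<dots> = d i0 * emb [:fact i0:]" using i0K by simp
  finally have "d i0 * emb [:fact i0:] = 0" using z by simp
  then show False using di0 by (simp add: emb_eq_0)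
qed

lemma act_diff:
  assumes "ord_le d K" "ord_le e K"
  shows "act (\<lambda>n. d n - e n) r = act d r - act e r"
proof -
  have o: "ord_le (\<lambda>n. d n - e n) K" using assms by (simp add: ord_le_def)
  show ?thesis
    by (simp add: act_ord[OF o] act_ord[OF assms(1)] act_ord[OF assms(2)] left_diff_distrib sum_subtractf)
qed

lemma faithful2:
  assumes "ord_le d K" "ord_le e K" "\<And>r. act d r = act e r"
  shows "d = e"
proof -
  have "(\<lambda>n. d n - e n) = (\<lambda>_. 0)"
    by (rule faithful[of _ K]) (use assms in \<open>simp_all add: act_diff ord_le_def\<close>)
  then show ?thesis by (simp add: fun_eq_iff)
qed

lemma sum_delta0:
  assumes "0 < K"
  shows "(\<Sum>u<K. kap ((0::'k::field_char_0) ^ u / fact u) * (Ad p ^^ u) X r) = X r"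
proof -
  have "(\<Sum>u<K. kap ((0::'k) ^ u / fact u) * (Ad p ^^ u) X r) = (\<Sum>u<K. if u = 0 then X r else 0)"
  proof (rule sum.cong[OF refl])
    fix u show "kap ((0::'k) ^ u / fact u) * (Ad p ^^ u) X r = (if u = 0 then X r else 0)"
      by (cases u) (simp_all add: kap_0 kap_1)
  qed
  also have "\<dots> = X r" using assms by simp
  finally show ?thesis .
qed

lemma iterate_exp:
  assumes d: "ord_le d K" and K: "0 < K"
  shows "ord_le ((exp_ad p ^^ n) d) K \<and>
     act ((exp_ad p ^^ n) d) = (\<lambda>r. \<Sum>s<K. kap (of_nat n ^ s / fact s) * (Ad p ^^ s) (act d) r)"
proof (induction n)
  case 0
  show ?case using d by (simp add: fun_eq_iff sum_delta0[OF K])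
next
  case (Suc n)
  have "act (exp_ad p ((exp_ad p ^^ n) d)) r = (\<Sum>u<K. kap ((of_nat n + 1) ^ u / fact u) * (Ad p ^^ u) (act d) r)" for r
    by (rule compose_exp[OF d]) (use Suc in auto)
  moreover have "ord_le (exp_ad p ((exp_ad p ^^ n) d)) K" using Suc by (simp add: ord_exp_ad)
  ultimately show ?case by (simp add: fun_eq_iff add.commute)
qed



lemma kap_minus: "kap (- c) = - kap c" by (simp add: kap_def emb_minus[symmetric])
lemma kap_diff: "kap (a - b) = kap a - kap b" by (simp add: kap_def emb_diff[symmetric])

lemma pow_diff_binom:
  fixes x :: "'k::comm_ring_1"
  shows "(x + 1) ^ t - x ^ t = (\<Sum>r<t. of_nat (t choose r) * x ^ r)"
proof -
  have "(x + 1) ^ t = (\<Sum>r\<le>t. of_nat (t choose r) * x ^ r * 1 ^ (t - r))"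
    by (rule binomial_ring)
  also have "\<dots> = (\<Sum>r<t. of_nat (t choose r) * x ^ r) + x ^ t"
    by (simp add: lessThan_Suc_atMost[symmetric])
  finally show ?thesis by simp
qed

lemma extract_coeffs:
  fixes W :: "'k::field_char_0 poly fract set"
  assumes add: "\<And>x y. x \<in> W \<Longrightarrow> y \<in> W \<Longrightarrow> x + y \<in> W"
    and sc: "\<And>c x. x \<in> W \<Longrightarrow> kap c * x \<in> W"
  shows "(\<And>n::nat. (\<Sum>s<K. kap (of_nat n ^ s) * a s) \<in> W) \<Longrightarrow> s < K \<Longrightarrow> a s \<in> W"
proof (induction K arbitrary: a s)
  case 0 then show ?case by simp
next
  case (Suc K a s)
  have sub: "x - y \<in> W" if "x \<in> W" "y \<in> W" for x y
    using add[OF that(1) sc[OF that(2), of "-1"]] by (simp add: kap_minus kap_1)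
  define q where "q n = (\<Sum>s<Suc K. kap (of_nat n ^ s) * a s)" for n :: nat
  have qW: "q n \<in> W" for n using Suc.prems(1) by (simp add: q_def)
  show ?case
  proof (cases K)
    case 0
    then show ?thesis using qW[of 0] Suc.prems(2) by (simp add: q_def kap_1)
  next
    case (Suc K1)
    define b where "b r = (\<Sum>t<Suc K. if r < t then kap (of_nat (t choose r)) * a t else 0)" for r
    have diffeq: "q (Suc n) - q n = (\<Sum>r<K. kap (of_nat n ^ r) * b r)" for n
    proof -
      have "q (Suc n) - q n = (\<Sum>t<Suc K. kap ((of_nat n + 1) ^ t - of_nat n ^ t) * a t)"
        by (simp add: q_def kap_diff left_diff_distrib sum_subtractf add.commute)
      also have "\<dots> = (\<Sum>t<Suc K. \<Sum>r<K. if r < t then kap (of_nat n ^ r) * (kap (of_nat (t choose r)) * a t) else 0)"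
      proof (rule sum.cong[OF refl])
        fix t assume t: "t \<in> {..<Suc K}"
        have "kap ((of_nat n + 1) ^ t - of_nat n ^ t) * a t = (\<Sum>r<t. kap (of_nat n ^ r) * (kap (of_nat (t choose r)) * a t))"
          by (simp only: pow_diff_binom) (simp add: kap_sum kap_mult sum_distrib_right sum_distrib_left ac_simps)
        also have "\<dots> = (\<Sum>r\<in>{..<K} \<inter> {r. r < t}. kap (of_nat n ^ r) * (kap (of_nat (t choose r)) * a t))"
          using t by (intro sum.cong) auto
        also have "\<dots> = (\<Sum>r<K. if r < t then kap (of_nat n ^ r) * (kap (of_nat (t choose r)) * a t) else 0)"
          by (simp add: sum.inter_restrict)
        finally show "kap ((of_nat n + 1) ^ t - of_nat n ^ t) * a t = (\<Sum>r<K. if r < t then kap (of_nat n ^ r) * (kap (of_nat (t choose r)) * a t) else 0)" .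
      qed
      also have "\<dots> = (\<Sum>r<K. \<Sum>t<Suc K. if r < t then kap (of_nat n ^ r) * (kap (of_nat (t choose r)) * a t) else 0)"
        by (rule sum.swap)
      also have "\<dots> = (\<Sum>r<K. kap (of_nat n ^ r) * b r)"
        unfolding b_def sum_distrib_left by (rule sum.cong[OF refl], rule sum.cong[OF refl]) simp
      finally show ?thesis .
    qed
    have bW: "\<And>n. (\<Sum>r<K. kap (of_nat n ^ r) * b r) \<in> W"
      using diffeq sub qW by metis
    have "b K1 \<in> W" using Suc.IH[OF bW] \<open>K = Suc K1\<close> by simp
    moreover have "b K1 = kap (of_nat K) * a K"
    proof -
      have "b K1 = (\<Sum>t<Suc K. if t = K then kap (of_nat (t choose K1)) * a t else 0)"
        unfolding b_def by (rule sum.cong[OF refl]) (use \<open>K = Suc K1\<close> in auto)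
      also have "\<dots> = kap (of_nat (K choose K1)) * a K" by simp
      finally show ?thesis using \<open>K = Suc K1\<close> by simp
    qed
    ultimately have "kap (inverse (of_nat K)) * (kap (of_nat K) * a K) \<in> W" using sc by metis
    then have aK: "a K \<in> W"
      using \<open>K = Suc K1\<close> by (simp add: mult.assoc[symmetric] kap_mult[symmetric] kap_1 del: of_nat_Suc)
    have "\<And>n. (\<Sum>s<K. kap (of_nat n ^ s) * a s) \<in> W"
    proof -
      fix n
      have "(\<Sum>s<K. kap (of_nat n ^ s) * a s) = q n - kap (of_nat n ^ K) * a K"
        by (simp add: q_def)
      then show "(\<Sum>s<K. kap (of_nat n ^ s) * a s) \<in> W" using sub[OF qW sc[OF aK]] by simp
    qed
    then have "s < K \<Longrightarrow> a s \<in> W" using Suc.IH by blast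
    then show ?thesis using aK Suc.prems(2) by (cases "s = K") auto
  qed
qed



definition rho :: "'k::field_char_0 poly \<Rightarrow> nat \<Rightarrow> 'k poly \<Rightarrow> 'k poly" where
  "rho g M r = (\<Sum>i\<le>M. smult ((-1) ^ i) ((pderiv ^^ (M - i)) g * (pderiv ^^ i) r))"

lemma pderiv_rho:
  "pderiv (rho g M r) = (pderiv ^^ Suc M) g * r + smult ((-1) ^ M) (g * (pderiv ^^ Suc M) r)"
proof (induction M arbitrary: g)
  case 0
  then show ?case by (simp add: rho_def pderiv_mult algebra_simps)
next
  case (Suc M)
  have "rho g (Suc M) r = rho (pderiv g) M r + smult ((-1) ^ Suc M) (g * (pderiv ^^ Suc M) r)"
  proof -
    have "rho g (Suc M) r = (\<Sum>i\<le>M. smult ((-1) ^ i) ((pderiv ^^ (Suc M - i)) g * (pderiv ^^ i) r))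
        + smult ((-1) ^ Suc M) (g * (pderiv ^^ Suc M) r)"
      by (simp add: rho_def del: funpow.simps)
    also have "(\<Sum>i\<le>M. smult ((-1) ^ i) ((pderiv ^^ (Suc M - i)) g * (pderiv ^^ i) r)) = rho (pderiv g) M r"
      unfolding rho_def
      by (rule sum.cong[OF refl]) (simp add: Suc_diff_le funpow_Suc_right del: funpow.simps)
    finally show ?thesis .
  qed
  then have "pderiv (rho g (Suc M) r) = pderiv (rho (pderiv g) M r) + smult ((-1) ^ Suc M) (pderiv (g * (pderiv ^^ Suc M) r))"
    by (simp add: pderiv_add pderiv_smult pderiv_diff pderiv_minus)
  also have "\<dots> = (pderiv ^^ Suc (Suc M)) g * r + smult ((-1) ^ Suc M) (g * (pderiv ^^ Suc (Suc M)) r)"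
    unfolding Suc.IH by (simp add: pderiv_mult funpow_Suc_right funpow_swap1 del: funpow.simps) (simp add: algebra_simps smult_add_right)
  finally show ?case .
qed

lemma higher_pderiv_beyond: "degree g < m \<Longrightarrow> (pderiv ^^ m) (g::'k::field_char_0 poly) = 0"
  by (rule poly_eqI) (simp add: coeff_higher_pderiv coeff_eq_0)

lemma higher_pderiv_degree: "(pderiv ^^ degree g) (g::'k::field_char_0 poly) = [:fact (degree g) * lead_coeff g:]"
  apply (rule poly_eqI)
  apply (simp add: coeff_higher_pderiv coeff_pCons pochhammer_fact[symmetric] split: nat.split)
  by (simp add: coeff_eq_0)

lemma higher_pderiv_one: "0 < i \<Longrightarrow> (pderiv ^^ i) (1::'k::field_char_0 poly) = 0"
  by (rule higher_pderiv_beyond) simp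

lemma rho_one: "rho g M 1 = (pderiv ^^ M) g"
proof -
  have "rho g M 1 = (\<Sum>i\<le>M. if i = 0 then (pderiv ^^ M) g else 0)"
    unfolding rho_def by (rule sum.cong[OF refl]) (auto simp: higher_pderiv_one)
  also have "\<dots> = (pderiv ^^ M) g" by simp
  finally show ?thesis .
qed

lemma rho_O: "rho b (degree b) r \<in> Oset b"
proof -
  have "(pderiv ^^ Suc (degree b)) b = 0" by (rule higher_pderiv_beyond) simp
  then show ?thesis unfolding Oset_def
    unfolding mem_Collect_eq pderiv_rho by (simp add: dvd_smult del: funpow.simps)
qed

definition dop_of :: "'k::field_char_0 poly \<Rightarrow> 'k poly \<Rightarrow> 'k diffop" where
  "dop_of v b = (\<lambda>i. if i \<le> degree b then emb (v * smult ((-1) ^ i) ((pderiv ^^ (degree b - i)) b)) else 0)"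

lemma ord_dop_of: "ord_le (dop_of v b) (Suc (degree b))"
  by (simp add: ord_le_def dop_of_def)

lemma act_dop_of: "act (dop_of v b) r = emb (v * rho b (degree b) r)"
proof -
  have "act (dop_of v b) r = (\<Sum>i<Suc (degree b). dop_of v b i * emb ((pderiv ^^ i) r))"
    by (rule act_ord[OF ord_dop_of])
  also have "\<dots> = (\<Sum>i\<le>degree b. emb (v * smult ((-1) ^ i) ((pderiv ^^ (degree b - i)) b * (pderiv ^^ i) r)))"
    by (simp add: lessThan_Suc_atMost dop_of_def emb_mult[symmetric] ac_simps)
  also have "\<dots> = emb (v * rho b (degree b) r)"
    by (simp add: rho_def emb_sum[symmetric] sum_distrib_left)
  finally show ?thesis .
qed



lemma Dop_iff: "d \<in> Dop (range emb) W \<longleftrightarrow> is_diffop d \<and> (\<forall>r. act d r \<in> W)"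
  by (auto simp: Dop_def act_def)

lemma W_sum:
  assumes "\<And>x y. x \<in> W \<Longrightarrow> y \<in> W \<Longrightarrow> x + y \<in> W" "(0::'k::field_char_0 poly fract) \<in> W"
    "\<And>c x. x \<in> W \<Longrightarrow> kap c * x \<in> W"
  shows "(\<And>m. m \<in> A \<Longrightarrow> X m \<in> W) \<Longrightarrow> (\<Sum>m\<in>A. kap (c m) * X m) \<in> W"
  by (induction A rule: infinite_finite_induct) (auto intro: assms)

theorem theorem6:
  fixes V :: "'k::field_char_0 poly set" and p :: "'k poly"
  assumes "primary_decomposable V"
  shows "exp_ad p ` Dop (range emb) (emb ` V) = Dop (range emb) (emb ` V) \<longleftrightarrow> p \<in> Sset V"
proof -
  define W where "W = emb ` V"
  from assms have sub: "k_subspace V" and Vb: "\<exists>b. b \<noteq> 0 \<and> Oset b \<subseteq> Sset V"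
    by (auto simp: primary_decomposable_def)
  have V0: "0 \<in> V" and Vadd: "\<And>x y. x \<in> V \<Longrightarrow> y \<in> V \<Longrightarrow> x + y \<in> V"
    and Vsm: "\<And>c x. x \<in> V \<Longrightarrow> smult c x \<in> V"
    using sub by (auto simp: k_subspace_def)
  have W0: "0 \<in> W" using V0 by (force simp: W_def emb_0)
  have Wadd: "x + y \<in> W" if "x \<in> W" "y \<in> W" for x y
    using that Vadd by (auto simp: W_def emb_add[symmetric])
  have Wsc: "kap c * x \<in> W" if "x \<in> W" for c x
    using that Vsm by (auto simp: W_def kap_emb)
  have Wsub: "x - y \<in> W" if "x \<in> W" "y \<in> W" for x y
    using Wadd[OF that(1) Wsc[OF that(2), of "-1"]] by (simp add: kap_minus kap_1)
  have Wsum: "(\<Sum>m\<in>A. kap (c m) * X m) \<in> W" if "\<And>m. m \<in> A \<Longrightarrow> X m \<in> W" for A c X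
    by (rule W_sum[OF Wadd W0 Wsc that]) auto
  have Wemb: "emb x \<in> W \<longleftrightarrow> x \<in> V" for x by (auto simp: W_def emb_inj)
  show ?thesis
  proof
    assume eq: "exp_ad p ` Dop (range emb) (emb ` V) = Dop (range emb) (emb ` V)"
    show "p \<in> Sset V"
      unfolding Sset_def mem_Collect_eq
    proof
      fix v assume v: "v \<in> V"
      obtain b where b: "b \<noteq> 0" "Oset b \<subseteq> Sset V" using Vb by blast
      define N where "N = degree b"
      define d where "d = dop_of v b"
      define K where "K = Suc (Suc N)"
      have K0: "0 < K" by (simp add: K_def)
      have oK: "ord_le d K" using ord_dop_of[of v b] by (auto simp: d_def K_def N_def intro: ord_le_mono)
      have rhoV: "v * rho b N r \<in> V" for r
        using rho_O[of b r] b(2) v by (auto simp: Sset_def N_def mult.commute)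
      have actd: "act d r = emb (v * rho b N r)" for r by (simp add: d_def N_def act_dop_of)
      have dD: "d \<in> Dop (range emb) W"
        using oK rhoV by (simp add: Dop_iff ord_le_diffop actd Wemb)
      have iter: "(exp_ad p ^^ n) d \<in> Dop (range emb) W" for n
      proof (induction n)
        case 0 then show ?case using dD by simp
        next
        case (Suc n)
        then have "exp_ad p ((exp_ad p ^^ n) d) \<in> exp_ad p ` Dop (range emb) W" by blast
        then show ?case using eq by (simp add: W_def)
      qed
      define a where "a s = kap (inverse (fact s)) * (Ad p ^^ s) (act d) 1" for s
      have "(\<Sum>s<K. kap (of_nat n ^ s) * a s) \<in> W" for n
      proof -
        have "act ((exp_ad p ^^ n) d) 1 \<in> W" using iter[of n] by (simp add: Dop_iff)
        moreover have "act ((exp_ad p ^^ n) d) 1 = (\<Sum>s<K. kap (of_nat n ^ s) * a s)"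
          using conjunct2[OF iterate_exp[OF oK K0, where p=p and n=n]] by (simp add: a_def kap_mult divide_inverse mult.assoc)
        ultimately show ?thesis by simp
      qed
      then have "a 1 \<in> W" using extract_coeffs[OF Wadd Wsc, where K=K and a=a and s=1] by (simp add: K_def)
      then have A1: "Ad p (act d) 1 \<in> W" by (simp add: a_def kap_1)
      have rho1: "rho b N 1 = [:fact N * lead_coeff b:]"
        by (simp add: rho_one N_def higher_pderiv_degree)
      have "Ad p (act d) 1 = emb (v * rho b N p) - emb (smult (fact N * lead_coeff b) (p * v))"
        by (simp add: Ad_def actd rho1 emb_mult[symmetric] ac_simps)
      then have "emb (smult (fact N * lead_coeff b) (p * v)) = emb (v * rho b N p) - Ad p (act d) 1"
        by simp
      moreover have "emb (v * rho b N p) \<in> W" using rhoV[of p] Wemb by simp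
      ultimately have "emb (smult (fact N * lead_coeff b) (p * v)) \<in> W"
        using Wsub[OF _ A1] by simp
      then have "smult (inverse (fact N * lead_coeff b)) (smult (fact N * lead_coeff b) (p * v)) \<in> V"
        using Vsm Wemb by blast
      moreover have "fact N * lead_coeff b \<noteq> (0::'k)" using b(1) by simp
      then have "smult (inverse (fact N * lead_coeff b)) (smult (fact N * lead_coeff b) (p * v)) = p * v"
        by (metis smult_smult left_inverse smult_1_left)
      ultimately show "p * v \<in> V" by simp
    qed
  next
    assume pS: "p \<in> Sset V"
    have Adpres: "\<forall>r. (Ad p ^^ m) X r \<in> W" if "\<forall>r. X r \<in> W" for m X
    proof (induction m)
      case 0 then show ?case using that by simp
    next
      case (Suc m)
      show ?case
      proof
        fix r
        obtain w where w: "w \<in> V" "(Ad p ^^ m) X r = emb w" using Suc by (auto simp: W_def)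
        have "p * w \<in> V" using pS w(1) by (simp add: Sset_def)
        have h1: "(Ad p ^^ m) X (p * r) \<in> W" using Suc by blast
        have "(Ad p ^^ Suc m) X r = (Ad p ^^ m) X (p * r) - emb (p * w)"
          by (simp add: Ad_def w emb_mult)
        then show "(Ad p ^^ Suc m) X r \<in> W"
          using Wsub[OF h1] \<open>p * w \<in> V\<close> Wemb by simp
      qed
    qed
    have fwd: "exp_ad p d \<in> Dop (range emb) W" if dD: "d \<in> Dop (range emb) W" for d
    proof -
      obtain K where oK: "ord_le d K" using dD diffop_ord by (auto simp: Dop_iff)
      have "act (exp_ad p d) r \<in> W" for r
        unfolding act_exp[OF oK]
        by (rule Wsum) (use Adpres dD in \<open>auto simp: Dop_iff\<close>)
      then show ?thesis using ord_exp_ad[OF oK] ord_le_diffop by (auto simp: Dop_iff)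
    qed
    have bwd: "e \<in> exp_ad p ` Dop (range emb) W" if eD: "e \<in> Dop (range emb) W" for e
    proof -
      obtain K0 where "ord_le e K0" using eD diffop_ord by (auto simp: Dop_iff)
      define K where "K = Suc K0"
      have oK: "ord_le e K" using \<open>ord_le e K0\<close> by (auto simp: K_def intro: ord_le_mono)
      define d where "d = (\<lambda>n. \<Sum>m<K. kap ((-1) ^ m / fact m) * (op_ad p ^^ m) e n)"
      have od: "ord_le d K" unfolding d_def by (rule ord_le_sum) (rule ord_op_ad_pow[OF oK])
      have actd: "act d = (\<lambda>r. \<Sum>m<K. kap ((-1) ^ m / fact m) * (Ad p ^^ m) (act e) r)"
        unfolding d_def
        by (rule ext, subst act_lin[where K=K]) (auto simp: ord_op_ad_pow[OF oK] act_pow[OF oK])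
      have dD: "d \<in> Dop (range emb) W"
        unfolding Dop_iff
      proof
        show "is_diffop d" using od by (rule ord_le_diffop)
        show "\<forall>r. act d r \<in> W"
          unfolding actd by (intro allI Wsum) (use Adpres eD in \<open>auto simp: Dop_iff\<close>)
      qed
      have "act (exp_ad p d) r = (\<Sum>u<K. kap ((-1 + 1) ^ u / fact u) * (Ad p ^^ u) (act e) r)" for r
        by (rule compose_exp[OF oK od actd])
      then have "act (exp_ad p d) r = act e r" for r
        using sum_delta0[of K p "act e" r] by (simp add: K_def)
      then have "exp_ad p d = e"
        by (rule faithful2[OF ord_exp_ad[OF od] oK])
      then show ?thesis using dD by blast
    qed
    show "exp_ad p ` Dop (range emb) (emb ` V) = Dop (range emb) (emb ` V)"
      using fwd bwd by (auto simp: W_def)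
  qed
qed

end
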